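(* Let $\mathfrak{H}$ be a fat Hoffman graph with $\lambda_{\min}(\mathfrak{H})>-3$. Then $\lambda_{\min}(\mathcal{S}(\mathfrak{H}))\ge\lambda_{\min}(\mathfrak{H})+1$.
   Context: A Hoffman graph $\mathfrak{H}$ is a finite simple graph $H$ together with a labeling of each vertex as slim or fat, such that every fat vertex is adjacent to at least one slim vertex and the fat vertices are pairwise non-adjacent. $V^s(\mathfrak{H})$ denotes the set of slim vertices and $N^f_{\mathfrak{H}}(x)$ the set of fat neighbours of $x$. $\mathfrak{H}$ is fat if every slim vertex has at least one fat neighbour. Writing the adjacency matrix of $H$ with fat vertices last as $\begin{pmatrix}A_s & C\\ C^T & O\end{pmatrix}$, set $B(\mathfrak{H})=A_s-CC^T$; $\lambda_{\min}(\mathfrak{H})$ is the smallest eigenvalue of $B(\mathfrak{H})$. An edge-signed graph is a simple graph each of whose edges is labelled $+$ or $-$; its signed adjacency matrix $M(\mathcal{S})$ has entries $1$ for $(+)$-edges, $-1$ for $(-)$-edges, $0$ otherwise, and $\lambda_{\min}(\mathcal{S})$ is its smallest eigenvalue. The special graph $\mathcal{S}(\mathfrak{H})$ is the edge-signed graph with vertex set $V^s(\mathfrak{H})$ in which distinct $u,v$ are joined by a $(+)$-edge iff $u,v$ are adjacent in $\mathfrak{H}$ and have no common fat neighbour, by a $(-)$-edge iff $u,v$ are non-adjacent in $\mathfrak{H}$ and have a common fat neighbour, and are not joined otherwise. *)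

theory Defs
  imports Complex_Main
begin

(* A Hoffman graph: finite vertex set V, slim vertices S \<subseteq> V (fat vertices are V - S),
   simple graph given by a symmetric irreflexive adjacency relation E on V. *)
definition hoffman_graph :: "'a set \<Rightarrow> 'a set \<Rightarrow> ('a \<Rightarrow> 'a \<Rightarrow> bool) \<Rightarrow> bool" where
  "hoffman_graph V S E \<longleftrightarrow>
     finite V \<and> S \<subseteq> V \<and>
     (\<forall>u v. E u v \<longrightarrow> u \<in> V \<and> v \<in> V) \<and>
     (\<forall>u v. E u v \<longrightarrow> E v u) \<and>
     (\<forall>u. \<not> E u u) \<and>
     (\<forall>f\<in>V - S. \<forall>g\<in>V - S. \<not> E f g) \<and>
     (\<forall>f\<in>V - S. \<exists>s\<in>S. E f s)"

definition fat_nbrs :: "'a set \<Rightarrow> 'a set \<Rightarrow> ('a \<Rightarrow> 'a \<Rightarrow> bool) \<Rightarrow> 'a \<Rightarrow> 'a set" where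
  "fat_nbrs V S E x = {f \<in> V - S. E x f}"

definition fat_hoffman_graph :: "'a set \<Rightarrow> 'a set \<Rightarrow> ('a \<Rightarrow> 'a \<Rightarrow> bool) \<Rightarrow> bool" where
  "fat_hoffman_graph V S E \<longleftrightarrow> hoffman_graph V S E \<and> (\<forall>x\<in>S. fat_nbrs V S E x \<noteq> {})"

(* B(H) = A_s - C C^T, indexed by slim vertices: (C C^T)_{uv} = |N^f(u) \<inter> N^f(v)| *)
definition B_matrix :: "'a set \<Rightarrow> 'a set \<Rightarrow> ('a \<Rightarrow> 'a \<Rightarrow> bool) \<Rightarrow> 'a \<Rightarrow> 'a \<Rightarrow> real" where
  "B_matrix V S E u v =
     (if E u v then 1 else 0) - real (card (fat_nbrs V S E u \<inter> fat_nbrs V S E v))"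

(* signed adjacency matrix of the special graph S(H), on vertex set S *)
definition special_matrix :: "'a set \<Rightarrow> 'a set \<Rightarrow> ('a \<Rightarrow> 'a \<Rightarrow> bool) \<Rightarrow> 'a \<Rightarrow> 'a \<Rightarrow> real" where
  "special_matrix V S E u v =
     (if u \<noteq> v \<and> E u v \<and> fat_nbrs V S E u \<inter> fat_nbrs V S E v = {} then 1
      else if u \<noteq> v \<and> \<not> E u v \<and> fat_nbrs V S E u \<inter> fat_nbrs V S E v \<noteq> {} then -1
      else 0)"

(* eigenvalue of a real square matrix M indexed by the finite set I
   (real eigenvalues; for symmetric matrices these are all eigenvalues) *)
definition is_eigenvalue_on :: "'a set \<Rightarrow> ('a \<Rightarrow> 'a \<Rightarrow> real) \<Rightarrow> real \<Rightarrow> bool" where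
  "is_eigenvalue_on I M \<mu> \<longleftrightarrow>
     (\<exists>x :: 'a \<Rightarrow> real. (\<exists>v\<in>I. x v \<noteq> 0) \<and>
        (\<forall>u\<in>I. (\<Sum>v\<in>I. M u v * x v) = \<mu> * x u))"

definition lambda_min_on :: "'a set \<Rightarrow> ('a \<Rightarrow> 'a \<Rightarrow> real) \<Rightarrow> real" where
  "lambda_min_on I M = Min {\<mu>. is_eigenvalue_on I M \<mu>}"

definition lambda_min_hoffman :: "'a set \<Rightarrow> 'a set \<Rightarrow> ('a \<Rightarrow> 'a \<Rightarrow> bool) \<Rightarrow> real" where
  "lambda_min_hoffman V S E = lambda_min_on S (B_matrix V S E)"

definition lambda_min_special :: "'a set \<Rightarrow> 'a set \<Rightarrow> ('a \<Rightarrow> 'a \<Rightarrow> bool) \<Rightarrow> real" where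
  "lambda_min_special V S E = lambda_min_on S (special_matrix V S E)"

end

theory Submission
  imports Defs "HOL-Analysis.Analysis" "Jordan_Normal_Form.Char_Poly"
begin

definition bil :: "'a set \<Rightarrow> ('a \<Rightarrow> 'a \<Rightarrow> real) \<Rightarrow> ('a \<Rightarrow> real) \<Rightarrow> ('a \<Rightarrow> real) \<Rightarrow> real" where
  "bil S A x z = (\<Sum>u\<in>S. \<Sum>v\<in>S. x u * A u v * z v)"

definition nsq :: "'a set \<Rightarrow> ('a \<Rightarrow> real) \<Rightarrow> real" where
  "nsq S x = (\<Sum>v\<in>S. x v * x v)"

definition symm_on :: "'a set \<Rightarrow> ('a \<Rightarrow> 'a \<Rightarrow> real) \<Rightarrow> bool" where
  "symm_on S A \<longleftrightarrow> (\<forall>u\<in>S. \<forall>v\<in>S. A u v = A v u)"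

lemma fin_eig:
  assumes "finite S"
  shows "finite {\<mu>. is_eigenvalue_on S A \<mu>}"
proof -
  define n where "n = card S"
  obtain h where h: "bij_betw h {0..<n} S" using ex_bij_betw_nat_finite[OF assms] n_def by blast
  define Am where "Am = Matrix.mat n n (\<lambda>(i,j). A (h i) (h j))"
  have Am: "Am \<in> carrier_mat n n" unfolding Am_def by simp
  have cp: "char_poly Am \<noteq> 0" using degree_monic_char_poly[OF Am] by auto
  have "{\<mu>. is_eigenvalue_on S A \<mu>} \<subseteq> {\<mu>. poly (char_poly Am) \<mu> = 0}"
  proof
    fix \<mu> assume "\<mu> \<in> {\<mu>. is_eigenvalue_on S A \<mu>}"
    then obtain x where x1: "\<exists>v\<in>S. x v \<noteq> 0" and x2: "\<forall>u\<in>S. (\<Sum>v\<in>S. A u v * x v) = \<mu> * x u"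
      unfolding is_eigenvalue_on_def by auto
    define vv where "vv = Matrix.vec n (\<lambda>i. x (h i))"
    from x1 obtain v where v: "v \<in> S" "x v \<noteq> 0" by auto
    then obtain i where i: "i < n" "h i = v" using h unfolding bij_betw_def by auto
    have nz: "vv \<noteq> 0\<^sub>v n"
    proof
      assume "vv = 0\<^sub>v n"
      then have "vv $ i = 0" using i by simp
      then show False using i v unfolding vv_def by simp
    qed
    have "Am *\<^sub>v vv = \<mu> \<cdot>\<^sub>v vv"
    proof (rule eq_vecI)
      show "dim_vec (Am *\<^sub>v vv) = dim_vec (\<mu> \<cdot>\<^sub>v vv)" unfolding Am_def vv_def by simp
      fix k assume k: "k < dim_vec (\<mu> \<cdot>\<^sub>v vv)"
      then have k': "k < n" unfolding vv_def by simp
      have hk: "h k \<in> S" using h k' unfolding bij_betw_def by auto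
      have "(Am *\<^sub>v vv) $ k = (\<Sum>j = 0..<n. A (h k) (h j) * x (h j))"
        using k' unfolding Am_def vv_def by (simp add: scalar_prod_def)
      also have "\<dots> = (\<Sum>w\<in>S. A (h k) w * x w)"
        using sum.reindex_bij_betw[OF h, of "\<lambda>w. A (h k) w * x w"] by simp
      also have "\<dots> = \<mu> * x (h k)" using x2 hk by simp
      also have "\<dots> = (\<mu> \<cdot>\<^sub>v vv) $ k" using k' unfolding vv_def by simp
      finally show "(Am *\<^sub>v vv) $ k = (\<mu> \<cdot>\<^sub>v vv) $ k" .
    qed
    then have "eigenvector Am vv \<mu>" unfolding eigenvector_def using nz Am unfolding vv_def by auto
    then have "eigenvalue Am \<mu>" unfolding eigenvalue_def by auto
    then show "\<mu> \<in> {\<mu>. poly (char_poly Am) \<mu> = 0}" using eigenvalue_root_char_poly[OF Am] by simp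
  qed
  then show ?thesis using poly_roots_finite[OF cp] finite_subset by blast
qed

lemma bil_sym: "symm_on S A \<Longrightarrow> bil S A x z = bil S A z x"
  unfolding bil_def symm_on_def
  apply (subst sum.swap)
  apply (intro sum.cong refl)
  by (simp add: mult_ac)

lemma bil_expand:
  assumes "symm_on S A"
  shows "bil S A (\<lambda>u. y u + t * w u) (\<lambda>u. y u + t * w u) = bil S A y y + 2 * t * bil S A w y + t * t * bil S A w w"
proof -
  have "bil S A (\<lambda>u. y u + t * w u) (\<lambda>u. y u + t * w u) = bil S A y y + t * bil S A w y + t * bil S A y w + t * t * bil S A w w"
    unfolding bil_def by (simp add: algebra_simps sum.distrib sum_distrib_left)
  then show ?thesis using bil_sym[OF assms, of y w] by simp
qed

lemma nsq_expand:
  "nsq S (\<lambda>u. y u + t * w u) = nsq S y + 2 * t * (\<Sum>u\<in>S. w u * y u) + t * t * nsq S w"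
  unfolding nsq_def by (simp add: algebra_simps sum.distrib sum_distrib_left)

lemma nsq_nonneg: "nsq S x \<ge> 0"
  unfolding nsq_def by (simp add: sum_nonneg)

lemma nsq_pos: "finite S \<Longrightarrow> v \<in> S \<Longrightarrow> x v \<noteq> 0 \<Longrightarrow> nsq S x > 0"
  unfolding nsq_def apply (rule sum_pos2[of S v]) apply simp_all using not_real_square_gt_zero by blast

lemma nsq_zero: "finite S \<Longrightarrow> nsq S x = 0 \<Longrightarrow> v \<in> S \<Longrightarrow> x v = 0"
  using nsq_pos by force

lemma eig_bil:
  assumes "\<forall>u\<in>S. (\<Sum>v\<in>S. A u v * x v) = \<mu> * x u"
  shows "bil S A x x = \<mu> * nsq S x"
proof -
  have "bil S A x x = (\<Sum>u\<in>S. x u * (\<Sum>v\<in>S. A u v * x v))"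
    unfolding bil_def by (simp add: sum_distrib_left mult.assoc)
  also have "\<dots> = (\<Sum>u\<in>S. \<mu> * (x u * x u))" using assms by (intro sum.cong) auto
  finally show ?thesis unfolding nsq_def by (simp add: sum_distrib_left)
qed

lemma quad_zero:
  fixes W C :: real
  assumes "\<forall>t. 0 \<le> 2 * t * W + t * t * C" "W \<ge> 0"
  shows "W = 0"
proof (rule ccontr)
  assume "W \<noteq> 0"
  then have W: "W > 0" using assms(2) by simp
  define a where "a = \<bar>C\<bar> + 1"
  have a: "a > 0" "C \<le> a - 1" unfolding a_def by auto
  have "0 \<le> 2 * (- W / a) * W + (- W / a) * (- W / a) * C" using assms(1) by blast
  then have "0 \<le> a * a * (2 * (- W / a) * W + (- W / a) * (- W / a) * C)" using a by simp
  also have "\<dots> = - 2 * a * W * W + W * W * C" using a by (simp add: field_simps)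
  also have "\<dots> \<le> - 2 * a * W * W + W * W * (a - 1)"
    using a W by (intro add_left_mono mult_left_mono) auto
  finally have "0 \<le> - W * W * (a + 1)" by (simp add: algebra_simps)
  moreover have "W * W * (a + 1) > 0" using W a by simp
  ultimately show False by linarith
qed

lemma cont_bil: "continuous_on X (\<lambda>x. bil S A x x)"
  unfolding bil_def
  by (intro continuous_intros continuous_on_subset[OF continuous_on_product_coordinates]) auto

lemma cont_nsq: "continuous_on X (\<lambda>x. nsq S x)"
  unfolding nsq_def
  by (intro continuous_intros continuous_on_subset[OF continuous_on_product_coordinates]) auto

lemma exists_min:
  assumes fin: "finite S" and ne: "S \<noteq> {}" and sym: "symm_on S A"
  shows "\<exists>\<rho>. is_eigenvalue_on S A \<rho> \<and> (\<forall>x. \<rho> * nsq S x \<le> bil S A x x)"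
proof -
  define F where "F = (\<lambda>v. if v \<in> S then {-1..1::real} else {0})"
  define K where "K = PiE UNIV F"
  have "compactin (product_topology (\<lambda>_. euclidean) UNIV) K"
    unfolding K_def compactin_PiE by (auto simp: F_def compactin_euclidean_iff)
  then have cK: "compact K" by (simp add: euclidean_product_topology compactin_euclidean_iff)
  have memK: "x \<in> K \<longleftrightarrow> (\<forall>v. x v \<in> F v)" for x unfolding K_def by (simp add: PiE_iff)
  define T where "T = K \<inter> {x. nsq S x = 1}"
  have "closed {x. nsq S x = 1}" by (intro closed_Collect_eq cont_nsq continuous_intros)
  then have cT: "compact T" unfolding T_def using cK compact_Int_closed by blast
  obtain s0 where s0: "s0 \<in> S" using ne by auto
  define e where "e = (\<lambda>v. if v = s0 then 1 else 0::real)"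
  have "e \<in> K" unfolding memK F_def e_def using s0 by auto
  moreover have "nsq S e = 1" unfolding nsq_def e_def using s0 fin
    by (simp add: if_distrib[of "\<lambda>z. z * _"] cong: if_cong)
  ultimately have neT: "T \<noteq> {}" unfolding T_def by auto
  obtain y where yT: "y \<in> T" and ymin: "\<forall>z\<in>T. bil S A y y \<le> bil S A z z"
    using continuous_attains_inf[OF cT neT cont_bil] by blast
  define \<rho> where "\<rho> = bil S A y y"
  have ny: "nsq S y = 1" using yT unfolding T_def by auto
  have claim1: "\<rho> * nsq S x \<le> bil S A x x" for x
  proof (cases "nsq S x = 0")
    case True
    then have "\<forall>v\<in>S. x v = 0" using nsq_zero[OF fin] by blast
    then have "bil S A x x = 0" unfolding bil_def by simp
    then show ?thesis using True by simp
  next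
    case False
    then have pos: "nsq S x > 0" using nsq_nonneg[of S x] by linarith
    define r where "r = sqrt (nsq S x)"
    have r: "r > 0" "r * r = nsq S x" unfolding r_def using pos by auto
    define z where "z = (\<lambda>v. if v \<in> S then x v / r else 0)"
    have nz: "nsq S z = 1"
    proof -
      have "nsq S z = (\<Sum>v\<in>S. x v * x v / (r * r))" unfolding nsq_def z_def by (intro sum.cong) auto
      also have "\<dots> = nsq S x / (r * r)" unfolding nsq_def by (simp add: sum_divide_distrib)
      finally show ?thesis using r pos by simp
    qed
    have "z \<in> K" unfolding memK F_def
    proof
      fix v show "z v \<in> (if v \<in> S then {-1..1} else {0})"
      proof (cases "v \<in> S")
        case True
        have "z v * z v \<le> nsq S z" unfolding nsq_def
          by (rule member_le_sum[OF True _ fin]) simp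
        then have "\<bar>z v\<bar> \<le> 1" using nz abs_square_le_1[of "z v"] by (simp add: power2_eq_square)
        then show ?thesis using True by auto
      qed (auto simp: z_def)
    qed
    then have "z \<in> T" unfolding T_def using nz by auto
    then have "\<rho> \<le> bil S A z z" using ymin unfolding \<rho>_def by blast
    also have "bil S A z z = bil S A x x / (r * r)"
    proof -
      have "bil S A z z = (\<Sum>u\<in>S. \<Sum>v\<in>S. x u * A u v * x v / (r * r))"
        unfolding bil_def z_def by (intro sum.cong refl) (auto simp: field_simps)
      also have "\<dots> = bil S A x x / (r * r)" unfolding bil_def by (simp add: sum_divide_distrib)
      finally show ?thesis .
    qed
    finally show ?thesis using r pos by (simp add: pos_le_divide_eq)
  qed
  define w where "w = (\<lambda>u. (\<Sum>v\<in>S. A u v * y v) - \<rho> * y u)"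
  have bwy: "bil S A w y - \<rho> * (\<Sum>u\<in>S. w u * y u) = nsq S w"
  proof -
    have "bil S A w y = (\<Sum>u\<in>S. w u * (\<Sum>v\<in>S. A u v * y v))"
      unfolding bil_def by (simp add: sum_distrib_left mult.assoc)
    then have "bil S A w y - \<rho> * (\<Sum>u\<in>S. w u * y u) = (\<Sum>u\<in>S. w u * ((\<Sum>v\<in>S. A u v * y v) - \<rho> * y u))"
      by (simp add: sum_distrib_left sum_subtractf algebra_simps)
    then show ?thesis unfolding nsq_def w_def by simp
  qed
  have "\<forall>t. 0 \<le> 2 * t * nsq S w + t * t * (bil S A w w - \<rho> * nsq S w)"
  proof
    fix t
    have "\<rho> * nsq S (\<lambda>u. y u + t * w u) \<le> bil S A (\<lambda>u. y u + t * w u) (\<lambda>u. y u + t * w u)"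
      by (rule claim1)
    then have "\<rho> * (1 + 2 * t * (\<Sum>u\<in>S. w u * y u) + t * t * nsq S w) \<le> \<rho> + 2 * t * bil S A w y + t * t * bil S A w w"
      unfolding nsq_expand bil_expand[OF sym] ny \<rho>_def[symmetric] .
    then show "0 \<le> 2 * t * nsq S w + t * t * (bil S A w w - \<rho> * nsq S w)"
      using bwy by (simp add: algebra_simps)
  qed
  then have "nsq S w = 0" using quad_zero nsq_nonneg by blast
  then have w0: "\<forall>u\<in>S. w u = 0" using nsq_zero[OF fin] by blast
  have "\<exists>v\<in>S. y v \<noteq> 0"
  proof (rule ccontr)
    assume "\<not> ?thesis"
    then have "nsq S y = 0" unfolding nsq_def by simp
    then show False using ny by simp
  qed
  moreover have "\<forall>u\<in>S. (\<Sum>v\<in>S. A u v * y v) = \<rho> * y u" using w0 unfolding w_def by simp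
  ultimately have "is_eigenvalue_on S A \<rho>" unfolding is_eigenvalue_on_def by blast
  then show ?thesis using claim1 by blast
qed

lemma lmin:
  assumes fin: "finite S" and ne: "S \<noteq> {}" and sym: "symm_on S A"
  shows "is_eigenvalue_on S A (lambda_min_on S A) \<and> (\<forall>x. lambda_min_on S A * nsq S x \<le> bil S A x x)"
proof -
  obtain \<rho> where r1: "is_eigenvalue_on S A \<rho>" and r2: "\<forall>x. \<rho> * nsq S x \<le> bil S A x x"
    using exists_min[OF assms] by blast
  have "Min {\<mu>. is_eigenvalue_on S A \<mu>} = \<rho>"
  proof (rule Min_eqI)
    show "finite {\<mu>. is_eigenvalue_on S A \<mu>}" by (rule fin_eig[OF fin])
    show "\<rho> \<in> {\<mu>. is_eigenvalue_on S A \<mu>}" using r1 by simp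
    fix \<mu> assume "\<mu> \<in> {\<mu>. is_eigenvalue_on S A \<mu>}"
    then obtain x where x1: "\<exists>v\<in>S. x v \<noteq> 0" and x2: "\<forall>u\<in>S. (\<Sum>v\<in>S. A u v * x v) = \<mu> * x u"
      unfolding is_eigenvalue_on_def by auto
    have pos: "nsq S x > 0" using x1 nsq_pos[OF fin] by blast
    have "\<rho> * nsq S x \<le> \<mu> * nsq S x" using r2 eig_bil[OF x2] by metis
    then show "\<rho> \<le> \<mu>" using pos by simp
  qed
  then show ?thesis using r1 r2 unfolding lambda_min_on_def by simp
qed

lemma pair_sum:
  assumes "finite S" "u \<in> S" "v \<in> S" "u \<noteq> v"
  shows "(\<Sum>a\<in>S. (if a = u \<or> a = v then 1 else 0) * f a) = f u + (f v :: real)"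
proof -
  have "(\<Sum>a\<in>S. (if a = u \<or> a = v then 1 else 0) * f a) = (\<Sum>a\<in>{u,v}. (if a = u \<or> a = v then 1 else 0) * f a)"
    using assms by (intro sum.mono_neutral_right) auto
  also have "\<dots> = f u + f v" using assms by simp
  finally show ?thesis .
qed

theorem mainTheorem4:
  fixes V S :: "'a set" and E :: "'a \<Rightarrow> 'a \<Rightarrow> bool"
  assumes "fat_hoffman_graph V S E"
    and "S \<noteq> {}"
    and "lambda_min_hoffman V S E > -3"
  shows "lambda_min_special V S E \<ge> lambda_min_hoffman V S E + 1"
proof -
  have hg: "hoffman_graph V S E" using assms(1) unfolding fat_hoffman_graph_def by blast
  have fat: "\<forall>x\<in>S. fat_nbrs V S E x \<noteq> {}" using assms(1) unfolding fat_hoffman_graph_def by blast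
  have finV: "finite V" using hg unfolding hoffman_graph_def by blast
  have SV: "S \<subseteq> V" using hg unfolding hoffman_graph_def by blast
  have Esym: "\<And>u v. E u v \<Longrightarrow> E v u" using hg unfolding hoffman_graph_def by blast
  have Eirr: "\<And>u. \<not> E u u" using hg unfolding hoffman_graph_def by blast
  have fin: "finite S" using finV SV finite_subset by blast
  define N where "N = fat_nbrs V S E"
  have finN: "finite (N u)" for u unfolding N_def fat_nbrs_def using finV by simp
  define B where "B = B_matrix V S E"
  define M where "M = special_matrix V S E"
  have Bsym: "symm_on S B" unfolding symm_on_def B_def B_matrix_def
    using Esym by (auto simp: Int_commute)
  have Msym: "symm_on S M" unfolding symm_on_def M_def special_matrix_def
    using Esym by (auto simp: Int_commute)
  define lB where "lB = lambda_min_on S B"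
  define lM where "lM = lambda_min_on S M"
  have lBdef: "lambda_min_hoffman V S E = lB" unfolding lB_def B_def lambda_min_hoffman_def ..
  have lMdef: "lambda_min_special V S E = lM" unfolding lM_def M_def lambda_min_special_def ..
  have LB: "\<forall>x. lB * nsq S x \<le> bil S B x x" using lmin[OF fin assms(2) Bsym] unfolding lB_def by blast
  have LM: "is_eigenvalue_on S M lM" using lmin[OF fin assms(2) Msym] unfolding lM_def by blast
  have gt: "lB > -3" using assms(3) lBdef by simp
  have Bdiag: "B u u = - real (card (N u))" for u unfolding B_def B_matrix_def N_def using Eirr by simp
  have step1: "card (N u \<inter> N v) \<le> 1" if uv: "u \<in> S" "v \<in> S" "u \<noteq> v" for u v
  proof (rule ccontr)
    assume "\<not> ?thesis"
    then have c2: "card (N u \<inter> N v) \<ge> 2" by simp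
    have cu: "card (N u) \<ge> 2" using c2 card_mono[OF finN, of "N u \<inter> N v" u] by auto
    have cv: "card (N v) \<ge> 2" using c2 card_mono[OF finN, of "N u \<inter> N v" v] by auto
    have Buv: "B u v \<le> -1" unfolding B_def B_matrix_def N_def[symmetric] using c2 by auto
    have Bvu: "B v u \<le> -1" using Buv Bsym uv unfolding symm_on_def by metis
    define e where "e = (\<lambda>a. if a = u \<or> a = v then 1 else 0::real)"
    have "bil S B e e = (\<Sum>a\<in>S. e a * (\<Sum>b\<in>S. e b * B a b))"
      unfolding bil_def by (simp add: sum_distrib_left mult_ac)
    also have "\<dots> = (B u u + B u v) + (B v u + B v v)"
      unfolding e_def using pair_sum[OF fin uv] by (simp add: pair_sum[OF fin uv])
    finally have "bil S B e e \<le> -6" using Buv Bvu cu cv Bdiag[of u] Bdiag[of v] by simp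
    moreover have "nsq S e = 2" unfolding nsq_def e_def using pair_sum[OF fin uv, of "\<lambda>_. 1"]
      by (simp add: if_distrib[of "\<lambda>z. z * _"] cong: if_cong)
    ultimately have "lB * 2 \<le> -6" using LB[rule_format, of e] by simp
    then show False using gt by simp
  qed
  have step2: "B u v = M u v - (if u = v then real (card (N u)) else 0)" if "u \<in> S" "v \<in> S" for u v
  proof (cases "u = v")
    case True then show ?thesis using Bdiag by (simp add: M_def special_matrix_def)
  next
    case False
    then have "card (N u \<inter> N v) \<le> 1" using step1 that by blast
    then have "card (N u \<inter> N v) = 0 \<or> card (N u \<inter> N v) = 1" by auto
    moreover have "card (N u \<inter> N v) = 0 \<longleftrightarrow> N u \<inter> N v = {}" using finN by simp
    ultimately show ?thesis using False unfolding B_def B_matrix_def M_def special_matrix_def N_def[symmetric]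
      by auto
  qed
  obtain x where x1: "\<exists>v\<in>S. x v \<noteq> 0" and x2: "\<forall>u\<in>S. (\<Sum>v\<in>S. M u v * x v) = lM * x u"
    using LM unfolding is_eigenvalue_on_def by auto
  have pos: "nsq S x > 0" using x1 nsq_pos[OF fin] by blast
  have bM: "bil S M x x = lM * nsq S x" by (rule eig_bil[OF x2])
  have "bil S B x x = (\<Sum>u\<in>S. \<Sum>v\<in>S. x u * M u v * x v - (if u = v then real (card (N u)) * (x u * x u) else 0))"
    unfolding bil_def
  proof (intro sum.cong refl)
    fix u v assume uv: "u \<in> S" "v \<in> S"
    show "x u * B u v * x v = x u * M u v * x v - (if u = v then real (card (N u)) * (x u * x u) else 0)"
      unfolding step2[OF uv] by (cases "u = v") (simp_all add: algebra_simps)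
  qed
  also have "\<dots> = bil S M x x - (\<Sum>u\<in>S. real (card (N u)) * (x u * x u))"
  proof -
    have "(\<Sum>u\<in>S. \<Sum>v\<in>S. x u * M u v * x v - (if u = v then real (card (N u)) * (x u * x u) else 0))
        = (\<Sum>u\<in>S. (\<Sum>v\<in>S. x u * M u v * x v) - real (card (N u)) * (x u * x u))"
      by (intro sum.cong refl) (simp add: sum_subtractf fin sum.delta)
    also have "\<dots> = bil S M x x - (\<Sum>u\<in>S. real (card (N u)) * (x u * x u))"
      unfolding bil_def by (simp add: sum_subtractf)
    finally show ?thesis .
  qed
  also have "\<dots> \<le> bil S M x x - nsq S x"
  proof -
    have "nsq S x \<le> (\<Sum>u\<in>S. real (card (N u)) * (x u * x u))"
      unfolding nsq_def
    proof (rule sum_mono)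
      fix u assume u: "u \<in> S"
      have "N u \<noteq> {}" using fat u unfolding N_def by blast
      then have "card (N u) \<ge> 1" using finN[of u] by (simp add: Suc_le_eq card_gt_0_iff)
      then show "x u * x u \<le> real (card (N u)) * (x u * x u)"
        using mult_right_mono[of 1 "real (card (N u))" "x u * x u"] by simp
    qed
    then show ?thesis by simp
  qed
  finally have bB: "bil S B x x \<le> bil S M x x - nsq S x" .
  have "(lM - 1) * nsq S x = lM * nsq S x - nsq S x" by (simp add: algebra_simps)
  then have "lB * nsq S x \<le> (lM - 1) * nsq S x" using LB[rule_format, of x] bB bM by linarith
  then have "lB \<le> lM - 1" using pos by simp
  then show ?thesis using lBdef lMdef by simp
qed

end
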